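(* For every complex number $a$ of modulus one, there is no $6\times 6$ complex Hadamard matrix all of whose entries lie in $\{1,a,-a^2\}$.
   Context: A complex Hadamard matrix (CHM) of order $n$ is an $n\times n$ complex matrix $H$ all of whose entries have modulus one and which satisfies $HH^\dagger=nI$. *)

theory Defs
  imports Complex_Main
begin

text \<open>An n x n complex matrix is represented as a function H :: nat => nat => complex,
  with entries H i j for i, j < n.\<close>

definition complex_hadamard :: "nat \<Rightarrow> (nat \<Rightarrow> nat \<Rightarrow> complex) \<Rightarrow> bool" where
  "complex_hadamard n H \<longleftrightarrow>
     (\<forall>i<n. \<forall>j<n. norm (H i j) = 1) \<and>
     (\<forall>i<n. \<forall>j<n. (\<Sum>k<n. H i k * cnj (H j k)) = (if i = j then of_nat n else 0))"

end

theory Submission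
  imports Defs
begin

definition S :: "complex \<Rightarrow> nat \<Rightarrow> complex" where
  "S a e = (if e = 0 then 1 else if e = 1 then a else - (a^2))"

definition ind :: "nat \<Rightarrow> nat \<Rightarrow> nat" where
  "ind e x = (if x = e then 1 else 0)"

definition pa :: "nat \<Rightarrow> nat \<Rightarrow> nat" where "pa x y = ind 0 x * ind 1 y + ind 1 x * ind 0 y"
definition pz :: "nat \<Rightarrow> nat \<Rightarrow> nat" where "pz x y = ind 1 x * ind 2 y + ind 2 x * ind 1 y"
definition pb :: "nat \<Rightarrow> nat \<Rightarrow> nat" where "pb x y = ind 0 x * ind 2 y + ind 2 x * ind 0 y"
definition W :: "nat \<Rightarrow> nat \<Rightarrow> nat \<Rightarrow> nat \<Rightarrow> nat" where
  "W \<alpha> \<beta> x y = \<alpha> * pa x y + \<beta> * pz x y + 3 * pb x y"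

lemma S_dec: "x < 3 \<Longrightarrow> S a x = of_nat (ind 0 x) + of_nat (ind 1 x) * a - of_nat (ind 2 x) * a^2"
  by (auto simp: S_def ind_def less_Suc_eq numeral_3_eq_3)

lemma ind_sum: "x < 3 \<Longrightarrow> ind 0 x + ind 1 x + ind 2 x = 1"
  by (auto simp: ind_def less_Suc_eq numeral_3_eq_3)

lemma p_le: "x < 3 \<Longrightarrow> y < 3 \<Longrightarrow> pa x y + pz x y + pb x y \<le> 1"
  by (auto simp: pa_def pz_def pb_def ind_def less_Suc_eq numeral_3_eq_3)

lemma W_diag: "W \<alpha> \<beta> x x = 0"
  by (auto simp: W_def pa_def pz_def pb_def ind_def)

lemma col_sum:
  fixes x :: "nat \<Rightarrow> nat"
  shows "(\<Sum>i<6. \<Sum>j<6. W \<alpha> \<beta> (x i) (x j)) =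
     \<alpha> * (2 * ((\<Sum>i<6. ind 0 (x i)) * (\<Sum>i<6. ind 1 (x i))))
   + \<beta> * (2 * ((\<Sum>i<6. ind 1 (x i)) * (\<Sum>i<6. ind 2 (x i))))
   + 3 * (2 * ((\<Sum>i<6. ind 0 (x i)) * (\<Sum>i<6. ind 2 (x i))))"
proof -
  have dsum: "\<And>a b. (\<Sum>i<(6::nat). \<Sum>j<(6::nat). ind a (x i) * ind b (x j)) = (\<Sum>i<6. ind a (x i)) * (\<Sum>i<6. ind b (x i))"
    by (simp add: sum_product)
  show ?thesis
    unfolding W_def pa_def pz_def pb_def distrib_left sum.distrib sum_distrib_left[symmetric] dsum
    by (simp add: sum_distrib_right[symmetric] algebra_simps)
qed

lemma col_m:
  fixes x :: "nat \<Rightarrow> nat"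
  assumes "\<forall>i<6. x i < 3"
  shows "(\<Sum>i<6. ind 0 (x i)) + (\<Sum>i<6. ind 1 (x i)) + (\<Sum>i<6. ind 2 (x i)) = 6"
proof -
  have "(\<Sum>i<6. ind 0 (x i)) + (\<Sum>i<6. ind 1 (x i)) + (\<Sum>i<6. ind 2 (x i))
      = (\<Sum>i<(6::nat). ind 0 (x i) + ind 1 (x i) + ind 2 (x i))" by (simp add: sum.distrib)
  also have "\<dots> = (\<Sum>i<(6::nat). 1)"
  proof (intro sum.cong refl)
    fix i assume "i \<in> {..<(6::nat)}" with assms show "ind 0 (x i) + ind 1 (x i) + ind 2 (x i) = 1"
      by (intro ind_sum) auto
  qed
  finally show ?thesis by simp
qed

lemma pair_W:
  fixes x y :: "nat \<Rightarrow> nat"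
  shows "(\<Sum>k<6. W \<alpha> \<beta> (x k) (y k)) = \<alpha> * (\<Sum>k<6. pa (x k) (y k)) + \<beta> * (\<Sum>k<6. pz (x k) (y k)) + 3 * (\<Sum>k<6. pb (x k) (y k))"
  by (simp add: W_def sum.distrib sum_distrib_left)

lemma pair_le:
  fixes x y :: "nat \<Rightarrow> nat"
  assumes "\<forall>k<6. x k < 3 \<and> y k < 3"
  shows "(\<Sum>k<6. pa (x k) (y k)) + (\<Sum>k<6. pz (x k) (y k)) + (\<Sum>k<6. pb (x k) (y k)) \<le> 6"
proof -
  have "(\<Sum>k<6. pa (x k) (y k)) + (\<Sum>k<6. pz (x k) (y k)) + (\<Sum>k<6. pb (x k) (y k))
     = (\<Sum>k<(6::nat). pa (x k) (y k) + pz (x k) (y k) + pb (x k) (y k))" by (simp add: sum.distrib)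
  also have "\<dots> \<le> (\<Sum>k<(6::nat). 1)"
  proof (intro sum_mono)
    fix k assume "k \<in> {..<(6::nat)}" with assms show "pa (x k) (y k) + pz (x k) (y k) + pb (x k) (y k) \<le> 1"
      by (intro p_le) auto
  qed
  finally show ?thesis by simp
qed

lemma re_val:
  assumes "x < 3" "y < 3" "u^2 + s^2 = 1"
  shows "Re (S (Complex u s) x * cnj (S (Complex u s) y)) =
     1 - ((1-u) * real (pa x y) + (1+u) * real (pz x y) + 2*u^2 * real (pb x y))"
proof -
  have ss: "\<And>w. s*(s*w) = (1 - u*u)*w" using assms(3) 
    by (metis add_diff_cancel_left' mult.assoc power2_eq_square)
  from assms(1,2) have "x \<in> {0,1,2}" "y \<in> {0,1,2}" by auto
  then show ?thesis
    using assms(3) by (auto simp: S_def pa_def pz_def pb_def ind_def power2_eq_square algebra_simps ss)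
qed

lemma pair_eq:
  fixes x y :: "nat \<Rightarrow> nat"
  assumes "u^2 + s^2 = 1" "\<forall>k<6. x k < 3 \<and> y k < 3"
    and "(\<Sum>k<6. S (Complex u s) (x k) * cnj (S (Complex u s) (y k))) = 0"
  shows "(1-u) * real (\<Sum>k<6. pa (x k) (y k)) + (1+u) * real (\<Sum>k<6. pz (x k) (y k))
         + 2*u^2 * real (\<Sum>k<6. pb (x k) (y k)) = 6"
proof -
  have "0 = Re (\<Sum>k<6. S (Complex u s) (x k) * cnj (S (Complex u s) (y k)))" using assms(3) by simp
  also have "\<dots> = (\<Sum>k<(6::nat). Re (S (Complex u s) (x k) * cnj (S (Complex u s) (y k))))" by (simp add: Re_sum)
  also have "\<dots> = (\<Sum>k<(6::nat). 1 - ((1-u) * real (pa (x k) (y k)) + (1+u) * real (pz (x k) (y k)) + 2*u^2 * real (pb (x k) (y k))))"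
  proof (intro sum.cong refl)
    fix k assume "k \<in> {..<(6::nat)}" with assms(1,2) show "Re (S (Complex u s) (x k) * cnj (S (Complex u s) (y k))) =
      1 - ((1-u) * real (pa (x k) (y k)) + (1+u) * real (pz (x k) (y k)) + 2*u^2 * real (pb (x k) (y k)))"
      by (intro re_val) auto
  qed
  also have "\<dots> = 6 - ((1-u) * real (\<Sum>k<6. pa (x k) (y k)) + (1+u) * real (\<Sum>k<6. pz (x k) (y k))
         + 2*u^2 * real (\<Sum>k<6. pb (x k) (y k)))"
    by (simp add: sum_subtractf sum.distrib sum_distrib_left)
  finally show ?thesis by linarith
qed

lemma pair_real:
  fixes P Q B :: nat and v :: real
  assumes "P + Q + B \<le> 6" "2/3 \<le> v" "v < 1"
    and "real P * (1 - v) + real Q * (1 + v) + 2 * v^2 * real B = 6"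
  shows "P + 3*Q + 3*B \<ge> 12"
proof (rule ccontr)
  assume "\<not> ?thesis"
  hence h: "P + 3*Q + 3*B \<le> 11" by simp
  have "(v - 2/3)*(v-1) \<le> 0" by (rule mult_nonneg_nonpos) (use assms(2,3) in auto)
  moreover have "(v - 2/3)*(v-1) = v*v - (5*v - 2)/3" by (simp add: field_simps)
  ultimately have ch: "v*v \<le> (5*v - 2)/3" by linarith
  have bnd: "P \<le> 6" "Q \<le> 6" "B \<le> 6" using assms(1) by auto
  have "P = 0 \<or> P = 1 \<or> P = 2 \<or> P = 3 \<or> P = 4 \<or> P = 5 \<or> P = 6" using bnd by arith
  moreover have "Q = 0 \<or> Q = 1 \<or> Q = 2 \<or> Q = 3" using h by arith
  moreover have "B = 0 \<or> B = 1 \<or> B = 2 \<or> B = 3" using h by arith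
  ultimately show False using h assms(1,2,3,4) ch
    by (auto simp: power2_eq_square)
qed
lemma col_nat:
  fixes m0 m1 m2 :: nat
  assumes "m0 + m1 + m2 = 6"
  shows "2*(m0*m1) + 2*(3*(m1*m2)) + 2*(3*(m0*m2)) \<le> 58"
    and "2*(3*(m0*m1)) + 2*(m1*m2) + 2*(3*(m0*m2)) \<le> 58"
proof -
  have "m0 = 0 \<or> m0 = 1 \<or> m0 = 2 \<or> m0 = 3 \<or> m0 = 4 \<or> m0 = 5 \<or> m0 = 6" using assms by arith
  moreover have "m1 = 0 \<or> m1 = 1 \<or> m1 = 2 \<or> m1 = 3 \<or> m1 = 4 \<or> m1 = 5 \<or> m1 = 6" using assms by arith
  moreover have "m2 = 6 - m0 - m1" using assms by arith
  ultimately show "2*(m0*m1) + 2*(3*(m1*m2)) + 2*(3*(m0*m2)) \<le> 58"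
    and "2*(3*(m0*m1)) + 2*(m1*m2) + 2*(3*(m0*m2)) \<le> 58" using assms by auto
qed

lemma mid_col:
  fixes m0 m1 m2 :: nat and u s :: real
  assumes "m0 + m1 + m2 = 6" "u^2 + s^2 = 1" "\<bar>u\<bar> < 2/3"
  shows "(cmod (of_nat m0 + of_nat m1 * Complex u s - of_nat m2 * (Complex u s)^2))^2 > 6"
proof -
  let ?a = "Complex u s"
  let ?z = "of_nat m0 + of_nat m1 * ?a - of_nat m2 * ?a^2"
  have na: "cmod ?a = 1" using assms(2) by (simp add: cmod_def)
  define X where "X = (real m0 - real m2)*u + real m1"
  define Y where "Y = (-(real m0 + real m2))*s"
  have "cmod ?z = cmod (?z * cnj ?a)" by (simp add: norm_mult na)
  moreover have "?z * cnj ?a = Complex X Y"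
    using assms(2) unfolding X_def Y_def by (simp add: complex_eq_iff power2_eq_square algebra_simps)
  ultimately have "(cmod ?z)^2 = X^2 + Y^2"
    by (simp add: cmod_power2)
  also have "Y^2 = (real m0 + real m2)^2 * s^2" unfolding Y_def by (simp add: power2_eq_square algebra_simps)
  also have "X^2 + (real m0 + real m2)^2 * s^2 = ((real m0 - real m2)*u + real m1)^2 + (real m0 + real m2)^2 * (1 - u^2)"
  proof -
    have s2: "s^2 = 1 - u^2" using assms(2) by linarith
    show ?thesis unfolding X_def s2 ..
  qed
  finally have eq: "(cmod ?z)^2 = ((real m0 - real m2)*u + real m1)^2 + (real m0 + real m2)^2 * (1 - u^2)" .
  have "\<bar>u\<bar> * \<bar>u\<bar> < 2/3 * (2/3)" by (rule mult_strict_mono) (use assms(3) in auto)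
  hence u2: "u*u < 4/9" by simp
  have uu: "-2/3 < u" "u < 2/3" using assms(3) by auto
  have key: "((real m0 - real m2)*u + real m1)^2 + (real m0 + real m2)^2 * (1 - u^2)
     = real m1 * real m1 + (real m0 + real m2)*(real m0 + real m2) + 2*(real m0 - real m2)*real m1*u - 4*real m0*real m2*(u*u)"
    by (simp add: power2_eq_square algebra_simps)
  have "(m0 = 0 \<and> m1 = 0 \<and> m2 = 6) \<or> (m0 = 0 \<and> m1 = 1 \<and> m2 = 5) \<or> (m0 = 0 \<and> m1 = 2 \<and> m2 = 4) \<or> (m0 = 0 \<and> m1 = 3 \<and> m2 = 3) \<or> (m0 = 0 \<and> m1 = 4 \<and> m2 = 2) \<or> (m0 = 0 \<and> m1 = 5 \<and> m2 = 1) \<or> (m0 = 0 \<and> m1 = 6 \<and> m2 = 0) \<or> (m0 = 1 \<and> m1 = 0 \<and> m2 = 5) \<or> (m0 = 1 \<and> m1 = 1 \<and> m2 = 4) \<or> (m0 = 1 \<and> m1 = 2 \<and> m2 = 3) \<or> (m0 = 1 \<and> m1 = 3 \<and> m2 = 2) \<or> (m0 = 1 \<and> m1 = 4 \<and> m2 = 1) \<or> (m0 = 1 \<and> m1 = 5 \<and> m2 = 0) \<or> (m0 = 2 \<and> m1 = 0 \<and> m2 = 4) \<or> (m0 = 2 \<and> m1 = 1 \<and> m2 = 3) \<or> (m0 = 2 \<and> m1 = 2 \<and> m2 = 2) \<or> (m0 = 2 \<and> m1 = 3 \<and> m2 = 1) \<or> (m0 = 2 \<and> m1 = 4 \<and>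 m2 = 0) \<or> (m0 = 3 \<and> m1 = 0 \<and> m2 = 3) \<or> (m0 = 3 \<and> m1 = 1 \<and> m2 = 2) \<or> (m0 = 3 \<and> m1 = 2 \<and> m2 = 1) \<or> (m0 = 3 \<and> m1 = 3 \<and> m2 = 0) \<or> (m0 = 4 \<and> m1 = 0 \<and> m2 = 2) \<or> (m0 = 4 \<and> m1 = 1 \<and> m2 = 1) \<or> (m0 = 4 \<and> m1 = 2 \<and> m2 = 0) \<or> (m0 = 5 \<and> m1 = 0 \<and> m2 = 1) \<or> (m0 = 5 \<and> m1 = 1 \<and> m2 = 0) \<or> (m0 = 6 \<and> m1 = 0 \<and> m2 = 0)" using assms(1) by arith
  hence "real m1 * real m1 + (real m0 + real m2)*(real m0 + real m2) + 2*(real m0 - real m2)*real m1*u - 4*real m0*real m2*(u*u) > 6"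
    using u2 uu by (elim disjE; simp; linarith)
  hence "((real m0 - real m2)*u + real m1)^2 + (real m0 + real m2)^2 * (1 - u^2) > 6" using key by linarith
  with eq show ?thesis by simp
qed

lemma double_count:
  fixes t :: "nat \<Rightarrow> nat \<Rightarrow> nat" and \<alpha> \<beta> :: nat
  assumes tl: "\<And>i k. t i k < 3"
    and pr: "\<And>i j. i < 6 \<Longrightarrow> j < 6 \<Longrightarrow> i \<noteq> j \<Longrightarrow> 12 \<le> (\<Sum>k<6. W \<alpha> \<beta> (t i k) (t j k))"
    and cb: "\<And>m0 m1 m2. m0 + m1 + m2 = 6 \<Longrightarrow>
              \<alpha> * (2 * (m0 * m1)) + \<beta> * (2 * (m1 * m2)) + 3 * (2 * (m0 * m2)) \<le> 58"
  shows False
proof -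
  have "(\<Sum>i<(6::nat). \<Sum>j<(6::nat). (if i = j then 0 else 12::nat))
        \<le> (\<Sum>i<(6::nat). \<Sum>j<(6::nat). \<Sum>k<6. W \<alpha> \<beta> (t i k) (t j k))"
    by (intro sum_mono) (auto intro: pr)
  moreover have "(\<Sum>i<(6::nat). \<Sum>j<(6::nat). (if i = j then 0 else 12::nat)) = 360"
    by (simp add: numeral_eq_Suc lessThan_Suc)
  moreover have "(\<Sum>i<(6::nat). \<Sum>j<(6::nat). \<Sum>k<6. W \<alpha> \<beta> (t i k) (t j k))
      = (\<Sum>k<(6::nat). \<Sum>i<(6::nat). \<Sum>j<(6::nat). W \<alpha> \<beta> (t i k) (t j k))"
  proof -
    have "(\<Sum>i<(6::nat). \<Sum>j<(6::nat). \<Sum>k<(6::nat). W \<alpha> \<beta> (t i k) (t j k))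
        = (\<Sum>i<(6::nat). \<Sum>k<(6::nat). \<Sum>j<(6::nat). W \<alpha> \<beta> (t i k) (t j k))"
      by (intro sum.cong refl sum.swap)
    also have "\<dots> = (\<Sum>k<(6::nat). \<Sum>i<(6::nat). \<Sum>j<(6::nat). W \<alpha> \<beta> (t i k) (t j k))"
      by (rule sum.swap)
    finally show ?thesis .
  qed
  moreover have "(\<Sum>k<(6::nat). \<Sum>i<(6::nat). \<Sum>j<(6::nat). W \<alpha> \<beta> (t i k) (t j k)) \<le> (\<Sum>k<(6::nat). 58)"
  proof (intro sum_mono)
    fix k :: nat
    have m: "(\<Sum>i<6. ind 0 (t i k)) + (\<Sum>i<6. ind 1 (t i k)) + (\<Sum>i<6. ind 2 (t i k)) = 6"
      by (rule col_m) (simp add: tl)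
    show "(\<Sum>i<(6::nat). \<Sum>j<(6::nat). W \<alpha> \<beta> (t i k) (t j k)) \<le> 58"
      unfolding col_sum by (rule cb[OF m])
  qed
  ultimately show False by simp
qed

theorem mainTheorem11:
  fixes a :: complex
  assumes "norm a = 1"
  shows "\<not> (\<exists>H. complex_hadamard 6 H \<and>
               (\<forall>i<6. \<forall>j<6. H i j \<in> {1, a, - (a ^ 2)}))"
proof
  assume "\<exists>H. complex_hadamard 6 H \<and> (\<forall>i<6. \<forall>j<6. H i j \<in> {1, a, - (a ^ 2)})"
  then obtain H where hh: "complex_hadamard 6 H"
    and hs: "\<forall>i<6. \<forall>j<6. H i j \<in> {1, a, - (a ^ 2)}" by blast
  define u where "u = Re a"
  define s where "s = Im a"
  have aeq: "a = Complex u s" by (simp add: u_def s_def)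
  have us: "u^2 + s^2 = 1" using assms by (simp add: u_def s_def cmod_power2[symmetric])
  define t where "t = (\<lambda>i j. if H i j = 1 then 0 else if H i j = a then 1 else (2::nat))"
  have tlt: "\<And>i j. t i j < 3" by (simp add: t_def)
  have tH: "\<And>i j. i < 6 \<Longrightarrow> j < 6 \<Longrightarrow> H i j = S a (t i j)" using hs by (auto simp: t_def S_def)
  have orth: "\<And>i j. i < 6 \<Longrightarrow> j < 6 \<Longrightarrow> (\<Sum>k<6. H i k * cnj (H j k)) = (if i = j then 6 else 0)"
    using hh by (simp add: complex_hadamard_def)
  have orthS: "\<And>i j. i < 6 \<Longrightarrow> j < 6 \<Longrightarrow> i \<noteq> j \<Longrightarrow>
      (\<Sum>k<6. S (Complex u s) (t i k) * cnj (S (Complex u s) (t j k))) = 0"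
  proof -
    fix i j :: nat assume ij: "i < 6" "j < 6" "i \<noteq> j"
    have "(\<Sum>k<6. S (Complex u s) (t i k) * cnj (S (Complex u s) (t j k))) = (\<Sum>k<6. H i k * cnj (H j k))"
      using ij by (intro sum.cong refl) (simp add: tH aeq)
    also have "\<dots> = 0" using orth ij by simp
    finally show "(\<Sum>k<6. S (Complex u s) (t i k) * cnj (S (Complex u s) (t j k))) = 0" .
  qed
  have ule: "\<bar>u\<bar> \<le> 1" using us abs_square_le_1[of u]
    by (metis le_add_same_cancel1 zero_le_power2)
  consider (mid) "\<bar>u\<bar> < 2/3" | (pos) "2/3 \<le> u" "u < 1" | (neg) "-1 < u" "u \<le> -2/3"
    | (one) "u = 1 \<or> u = -1" using ule by linarith
  then show False
  proof cases
    case mid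
    have F2: "(\<Sum>k<(6::nat). (cmod (\<Sum>i<6. H i k))^2) = 36"
    proof -
      have "complex_of_real (\<Sum>k<(6::nat). (cmod (\<Sum>i<6. H i k))^2)
          = (\<Sum>k<(6::nat). (\<Sum>i<6. H i k) * cnj (\<Sum>j<6. H j k))"
        unfolding of_real_sum by (intro sum.cong refl) (simp only: complex_norm_square)
      also have "\<dots> = (\<Sum>k<(6::nat). \<Sum>i<(6::nat). \<Sum>j<(6::nat). H i k * cnj (H j k))"
        by (simp add: cnj_sum sum_product)
      also have "\<dots> = (\<Sum>i<(6::nat). \<Sum>k<(6::nat). \<Sum>j<(6::nat). H i k * cnj (H j k))"
        by (rule sum.swap)
      also have "\<dots> = (\<Sum>i<(6::nat). \<Sum>j<(6::nat). \<Sum>k<(6::nat). H i k * cnj (H j k))"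
        by (intro sum.cong refl sum.swap)
      also have "\<dots> = (\<Sum>i<(6::nat). \<Sum>j<(6::nat). (if i = j then 6 else 0))"
        by (intro sum.cong refl) (simp add: orth)
      also have "\<dots> = 36" by simp
      finally show ?thesis
        by (metis Re_complex_of_real numeral_eq_iff of_real_numeral)
    qed
    have col: "\<And>k. k < 6 \<Longrightarrow> (cmod (\<Sum>i<6. H i k))^2 > 6"
    proof -
      fix k :: nat assume k: "k < 6"
      let ?m0 = "\<Sum>i<6. ind 0 (t i k)"
      let ?m1 = "\<Sum>i<6. ind 1 (t i k)"
      let ?m2 = "\<Sum>i<6. ind 2 (t i k)"
      have "(\<Sum>i<6. H i k) = (\<Sum>i<(6::nat). of_nat (ind 0 (t i k)) + of_nat (ind 1 (t i k)) * a - of_nat (ind 2 (t i k)) * a^2)"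
        using k by (intro sum.cong refl) (simp add: tH S_dec tlt)
      also have "\<dots> = of_nat ?m0 + of_nat ?m1 * a - of_nat ?m2 * a^2"
        by (simp add: sum.distrib sum_subtractf sum_distrib_right)
      finally have e: "(\<Sum>i<6. H i k) = of_nat ?m0 + of_nat ?m1 * Complex u s - of_nat ?m2 * (Complex u s)^2"
        by (simp add: aeq)
      have m: "?m0 + ?m1 + ?m2 = 6" by (rule col_m) (simp add: tlt)
      show "(cmod (\<Sum>i<6. H i k))^2 > 6" unfolding e by (rule mid_col[OF m us mid])
    qed
    have "(\<Sum>k<(6::nat). (6::real)) < (\<Sum>k<(6::nat). (cmod (\<Sum>i<6. H i k))^2)"
      by (rule sum_strict_mono) (auto simp: lessThan_empty_iff intro: col)
    with F2 show False by simp
  next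
    case pos
    show False
    proof (rule double_count[of t 1 3])
      show "\<And>i k. t i k < 3" by (rule tlt)
      show "\<And>m0 m1 m2::nat. m0 + m1 + m2 = 6 \<Longrightarrow> 1 * (2 * (m0 * m1)) + 3 * (2 * (m1 * m2)) + 3 * (2 * (m0 * m2)) \<le> 58"
        using col_nat(1) by simp
      fix i j :: nat assume ij: "i < 6" "j < 6" "i \<noteq> j"
      have eq: "(1-u) * real (\<Sum>k<6. pa (t i k) (t j k)) + (1+u) * real (\<Sum>k<6. pz (t i k) (t j k))
         + 2*u^2 * real (\<Sum>k<6. pb (t i k) (t j k)) = 6"
        by (rule pair_eq[OF us _ orthS[OF ij]]) (simp add: tlt)
      have le: "(\<Sum>k<6. pa (t i k) (t j k)) + (\<Sum>k<6. pz (t i k) (t j k)) + (\<Sum>k<6. pb (t i k) (t j k)) \<le> 6"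
        by (rule pair_le) (simp add: tlt)
      have "12 \<le> (\<Sum>k<6. pa (t i k) (t j k)) + 3 * (\<Sum>k<6. pz (t i k) (t j k)) + 3 * (\<Sum>k<6. pb (t i k) (t j k))"
        by (rule pair_real[OF le pos]) (use eq in \<open>simp add: algebra_simps\<close>)
      then show "12 \<le> (\<Sum>k<6. W 1 3 (t i k) (t j k))" by (simp add: pair_W)
    qed
  next
    case neg
    show False
    proof (rule double_count[of t 3 1])
      show "\<And>i k. t i k < 3" by (rule tlt)
      show "\<And>m0 m1 m2::nat. m0 + m1 + m2 = 6 \<Longrightarrow> 3 * (2 * (m0 * m1)) + 1 * (2 * (m1 * m2)) + 3 * (2 * (m0 * m2)) \<le> 58"
        using col_nat(2) by simp
      fix i j :: nat assume ij: "i < 6" "j < 6" "i \<noteq> j"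
      have eq: "(1-u) * real (\<Sum>k<6. pa (t i k) (t j k)) + (1+u) * real (\<Sum>k<6. pz (t i k) (t j k))
         + 2*u^2 * real (\<Sum>k<6. pb (t i k) (t j k)) = 6"
        by (rule pair_eq[OF us _ orthS[OF ij]]) (simp add: tlt)
      have le: "(\<Sum>k<6. pz (t i k) (t j k)) + (\<Sum>k<6. pa (t i k) (t j k)) + (\<Sum>k<6. pb (t i k) (t j k)) \<le> 6"
        using pair_le[of "t i" "t j"] tlt by simp
      have v: "2/3 \<le> -u" "-u < 1" using neg by auto
      have "12 \<le> (\<Sum>k<6. pz (t i k) (t j k)) + 3 * (\<Sum>k<6. pa (t i k) (t j k)) + 3 * (\<Sum>k<6. pb (t i k) (t j k))"
        by (rule pair_real[OF le v]) (use eq in \<open>simp add: algebra_simps\<close>)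
      then show "12 \<le> (\<Sum>k<6. W 3 1 (t i k) (t j k))" by (simp add: pair_W)
    qed
  next
    case one
    have s0: "s = 0" using us one by auto
    have hv: "\<And>i k. i < 6 \<Longrightarrow> k < 6 \<Longrightarrow> H i k = 1 \<or> H i k = -1"
    proof -
      have ha: "a = 1 \<or> a = -1" using aeq s0 one by (auto simp: complex_eq_iff)
      fix i k :: nat assume "i < 6" "k < 6"
      then have "H i k \<in> {1, a, - (a ^ 2)}" using hs by blast
      then show "H i k = 1 \<or> H i k = -1" using ha by auto
    qed
    define T where "T = (\<lambda>k. (H 0 k + H 1 k) * cnj (H 0 k + H 2 k))"
    have "(\<Sum>k<(6::nat). T k) = (\<Sum>k<6. H 0 k * cnj (H 0 k)) + (\<Sum>k<6. H 0 k * cnj (H 2 k))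
         + (\<Sum>k<6. H 1 k * cnj (H 0 k)) + (\<Sum>k<6. H 1 k * cnj (H 2 k))"
      by (simp add: T_def sum.distrib algebra_simps)
    also have "\<dots> = 6" using orth[of 0 0] orth[of 0 2] orth[of 1 0] orth[of 1 2] by simp
    finally have T6: "(\<Sum>k<(6::nat). T k) = 6" .
    have "\<And>k. k < 6 \<Longrightarrow> T k = of_nat (4 * (if H 1 k = H 0 k \<and> H 2 k = H 0 k then 1 else 0))"
    proof -
      fix k :: nat assume k: "k < 6"
      from hv[of 0 k] hv[of 1 k] hv[of 2 k] k show "?thesis k"
        by (auto simp: T_def)
    qed
    hence "(\<Sum>k<(6::nat). T k) = (\<Sum>k<(6::nat). of_nat (4 * (if H 1 k = H 0 k \<and> H 2 k = H 0 k then 1 else 0)))"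
      by (intro sum.cong refl) auto
    also have "\<dots> = of_nat (4 * (\<Sum>k<(6::nat). (if H 1 k = H 0 k \<and> H 2 k = H 0 k then 1 else 0)))"
      by (simp add: sum_distrib_left)
    finally have "(of_nat (4 * (\<Sum>k<(6::nat). (if H 1 k = H 0 k \<and> H 2 k = H 0 k then 1 else 0))) :: complex) = of_nat 6"
      using T6 by simp
    hence "4 * (\<Sum>k<(6::nat). (if H 1 k = H 0 k \<and> H 2 k = H 0 k then 1 else 0::nat)) = 6"
      using of_nat_eq_iff by blast
    then show False by presburger
  qed
qed

end
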